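(* Let $f$ satisfy conditions (1) and (2a) and let $a>0$. Then the series \[ a\,e^{-pr^2}\sum_{n=0}^\infty\frac{c_{2n}(p)\,p^{2n}}{(n!)^2}\,r^{2n} \] is absolutely and uniformly convergent for all $r\in[0,\infty)$ and $p\in[0,\infty)$.
   Context: $f:[0,\infty)\to\mathbb{R}$; $c_n=2\pi\int_0^\infty f(r)\,r^{n+1}dr$ and $c_n(p)=2\pi\int_0^\infty f(r)\,r^{n+1}e^{-pr^2}dr$. Condition (1): there is a constant $F$ with $0\le f(r)\le F$ for all $r\ge0$, $c_0$ exists and $c_0>0$. Condition (2a): $c_{2n}$ exists for all $n\in\mathbb{N}_0$ and $c_n^{1/n}=o(n)$ as $n\to\infty$. *)

theory Defs
  imports "HOL-Analysis.Analysis" "HOL-Library.Landau_Symbols"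
begin

definition cmom :: "(real \<Rightarrow> real) \<Rightarrow> nat \<Rightarrow> real" where
  "cmom f n = 2 * pi * (LINT r:{0..}|lborel. f r * r ^ (n + 1))"

definition cmomp :: "(real \<Rightarrow> real) \<Rightarrow> nat \<Rightarrow> real \<Rightarrow> real" where
  "cmomp f n p = 2 * pi * (LINT r:{0..}|lborel. f r * r ^ (n + 1) * exp (- p * r\<^sup>2))"

definition cmom_exists :: "(real \<Rightarrow> real) \<Rightarrow> nat \<Rightarrow> bool" where
  "cmom_exists f n \<longleftrightarrow> set_integrable lborel {0..} (\<lambda>r. f r * r ^ (n + 1))"

definition cond1 :: "(real \<Rightarrow> real) \<Rightarrow> bool" where
  "cond1 f \<longleftrightarrow> (\<exists>F. \<forall>r\<ge>0. 0 \<le> f r \<and> f r \<le> F) \<and> cmom_exists f 0 \<and> cmom f 0 > 0"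

definition cond2a :: "(real \<Rightarrow> real) \<Rightarrow> bool" where
  "cond2a f \<longleftrightarrow> (\<forall>n. cmom_exists f (2 * n)) \<and>
     (\<lambda>n. root n (cmom f n)) \<in> o(\<lambda>n. real n)"

definition lterm :: "(real \<Rightarrow> real) \<Rightarrow> real \<Rightarrow> nat \<Rightarrow> real \<times> real \<Rightarrow> real" where
  "lterm f a n x = (case x of (r, p) \<Rightarrow>
     a * exp (- p * r\<^sup>2) * (cmomp f (2 * n) p * p ^ (2 * n) / (fact n)\<^sup>2 * r ^ (2 * n)))"

end

theory Submission
  imports Defs
begin

definition pois :: "real \<Rightarrow> nat \<Rightarrow> real" where
  "pois y n = exp (- y) * y ^ n / fact n"

definition qq :: "nat \<Rightarrow> real" where
  "qq n = pois (real n) n"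

lemma pois_nonneg: "y \<ge> 0 \<Longrightarrow> pois y n \<ge> 0"
  by (simp add: pois_def)

lemma cancel_aux: "(c::real) \<noteq> 0 \<Longrightarrow> a * (c * b) / (c * d) = a * b / d"
  by simp

lemma aux_frac: "(n::real) > 0 \<Longrightarrow> n * ((inverse n + inverse (n + 1)) / 2) = 1 - 1 / (2 * (n + 1))"
proof -
  assume n: "n > 0"
  have "inverse n + inverse (n + 1) = (2*n+1) / (n * (n+1))" using n by (simp add: field_simps)
  hence "n * ((inverse n + inverse (n + 1)) / 2) = (2*n+1) / (2*(n+1))" using n by simp
  also have "\<dots> = 1 - 1 / (2 * (n + 1))" using n by (simp add: field_simps)
  finally show ?thesis .
qed

lemma exp_ln_pow: "y > 0 \<Longrightarrow> exp (- y + real n * ln y) = exp (- y) * y ^ n"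
proof -
  assume y: "y > 0"
  have "exp (- y + real n * ln y) = exp (- y) * exp (real n * ln y)" by (rule exp_add)
  also have "exp (real n * ln y) = exp (ln y) ^ n" by (rule exp_of_nat_mult)
  finally show ?thesis using y by simp
qed

lemma pois_le_qq:
  assumes "y \<ge> 0" shows "pois y n \<le> qq n"
proof (cases "n = 0")
  case True thus ?thesis using assms by (simp add: pois_def qq_def)
next
  case False
  hence n: "real n > 0" by simp
  show ?thesis
  proof (cases "y = 0")
    case True thus ?thesis using False by (simp add: pois_def qq_def zero_power)
  next
    case False
    hence y: "y > 0" using assms by simp
    have "ln (y / n) \<le> y / n - 1" using y n by (intro ln_le_minus_one) auto
    hence "n * ln (y / n) \<le> n * (y / n - 1)" using n by (intro mult_left_mono) auto
    moreover have "n * (y / n - 1) = y - n" using n by (simp add: field_simps)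
    moreover have "n * ln (y / n) = n * ln y - n * ln n" using y n by (simp add: ln_div right_diff_distrib)
    ultimately have "n * ln y - n * ln n \<le> y - n" by simp
    hence "- y + n * ln y \<le> - real n + n * ln n" by simp
    hence I: "exp (- y + n * ln y) \<le> exp (- real n + n * ln n)" by simp
    have E1: "exp (- y + n * ln y) = exp (- y) * y ^ n"
      using y by (rule exp_ln_pow)
    have E2: "exp (- real n + n * ln n) = exp (- real n) * real n ^ n"
      using n by (rule exp_ln_pow)
    have "exp (- y) * y ^ n \<le> exp (- real n) * real n ^ n" using I unfolding E1 E2 .
    thus ?thesis by (simp add: pois_def qq_def divide_right_mono)
  qed
qed

lemma qq_step:
  assumes "n \<ge> 1" shows "qq (Suc n) \<le> qq n * exp (- 1 / (2 * (real n + 1)))"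
proof -
  have n: "real n > 0" using assms by simp
  have "ln (real n + 1) - ln n \<le> 1 * (inverse n + inverse (real n + 1)) / 2"
    using ln_inverse_approx_le[of "real n" 1] n by (simp add: add.commute)
  hence "n * (ln (real n + 1) - ln n) \<le> n * ((inverse n + inverse (real n + 1)) / 2)"
    using n by (intro mult_left_mono) auto
  also have "\<dots> = 1 - 1 / (2 * (real n + 1))"
    using aux_frac[of "real n"] n by metis
  finally have L: "n * ln (real n + 1) \<le> n * ln n + (1 - 1 / (2 * (real n + 1)))"
    by (simp add: algebra_simps)
  have "(real n + 1) ^ n = exp (n * ln (real n + 1))"
    by (simp add: exp_of_nat_mult)
  also have "\<dots> \<le> exp (n * ln n + (1 - 1 / (2 * (real n + 1))))" using L by simp
  also have "\<dots> = exp (n * ln n) * (exp 1 * exp (- 1 / (2 * (real n + 1))))"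
    by (simp add: exp_add[symmetric])
  also have "exp (n * ln n) = real n ^ n" using n by (simp add: exp_of_nat_mult)
  also have "real n ^ n * (exp 1 * exp (- 1 / (2 * (real n + 1)))) = real n ^ n * exp 1 * exp (- 1 / (2 * (real n + 1)))"
    by simp
  finally have A: "(real n + 1) ^ n \<le> real n ^ n * exp 1 * exp (- 1 / (2 * (real n + 1)))" .
  have "qq (Suc n) = exp (- (real n + 1)) * ((real n + 1) * (real n + 1) ^ n) / ((real n + 1) * fact n)"
    by (simp add: qq_def pois_def add.commute)
  also have "\<dots> = exp (- (real n + 1)) * (real n + 1) ^ n / fact n"
    by (rule cancel_aux) simp
  also have "\<dots> = exp (- real n) * exp (- 1) * (real n + 1) ^ n / fact n"
    by (simp add: exp_add[symmetric])
  also have "\<dots> \<le> exp (- real n) * exp (- 1) * (real n ^ n * exp 1 * exp (- 1 / (2 * (real n + 1)))) / fact n"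
    using A by (intro divide_right_mono mult_left_mono) auto
  also have "\<dots> = qq n * exp (- 1 / (2 * (real n + 1)))"
    by (simp add: qq_def pois_def exp_minus field_simps)
  finally show ?thesis .
qed

lemma qq_bound: "qq n \<le> exp ((1 - harm n) / 2)"
proof (induction n)
  case 0
  then show ?case by (simp add: qq_def pois_def harm_def)
next
  case (Suc n)
  show ?case
  proof (cases "n = 0")
    case True
    then show ?thesis by (simp add: qq_def pois_def harm_def)
  next
    case False
    have "qq (Suc n) \<le> qq n * exp (- 1 / (2 * (real n + 1)))"
      using False by (intro qq_step) auto
    also have "\<dots> \<le> exp ((1 - harm n) / 2) * exp (- 1 / (2 * (real n + 1)))"
      using Suc.IH by (intro mult_right_mono) auto
    also have "\<dots> = exp ((1 - harm n) / 2 + (- 1 / (2 * (real n + 1))))"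
      by (rule exp_add[symmetric])
    also have "(1 - harm n) / 2 + (- 1 / (2 * (real n + 1))) = (1 - harm (Suc n)) / 2"
      by (simp add: harm_Suc field_simps)
    finally show ?thesis .
  qed
qed

lemma qq_small:
  assumes "e > 0" shows "\<exists>M. \<forall>n\<ge>M. qq n \<le> e"
proof -
  have "\<forall>\<^sub>F n in sequentially. 1 - 2 * ln e \<le> harm n"
    using harm_at_top by (simp add: filterlim_at_top)
  then obtain M where M: "\<And>n. n \<ge> M \<Longrightarrow> 1 - 2 * ln e \<le> harm n"
    by (auto simp: eventually_sequentially)
  show ?thesis
  proof (intro exI allI impI)
    fix n assume "n \<ge> M"
    hence "1 - 2 * ln e \<le> harm n" using M by blast
    hence "(1 - harm n) / 2 \<le> ln e" by (simp add: field_simps)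
    hence "exp ((1 - harm n) / 2) \<le> exp (ln e)" by simp
    thus "qq n \<le> e" using qq_bound[of n] assms by simp
  qed
qed

lemma pois_sum_le1:
  assumes "x \<ge> 0" shows "(\<Sum>n<N. pois x n) \<le> 1"
proof -
  have "(\<Sum>n<N. x ^ n /\<^sub>R fact n) \<le> (\<Sum>n. x ^ n /\<^sub>R fact n)"
    using assms by (intro sum_le_suminf summable_exp_generic) auto
  also have "\<dots> = exp x" by (simp add: exp_def)
  finally have A: "(\<Sum>n<N. x ^ n / fact n) \<le> exp x" by (simp add: divide_inverse mult.commute)
  have "(\<Sum>n<N. pois x n) = exp (- x) * (\<Sum>n<N. x ^ n / fact n)"
    by (simp add: pois_def sum_distrib_left)
  also have "\<dots> \<le> exp (- x) * exp x" using A by (intro mult_left_mono) auto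
  also have "\<dots> = 1" by (simp add: exp_minus)
  finally show ?thesis .
qed

lemma pois_le1: "x \<ge> 0 \<Longrightarrow> pois x n \<le> 1"
proof -
  assume x: "x \<ge> 0"
  have "pois x n \<le> (\<Sum>k<Suc n. pois x k)"
    using x by (intro member_le_sum) (auto simp: pois_nonneg)
  also have "\<dots> \<le> 1" using pois_sum_le1 x by blast
  finally show ?thesis .
qed

lemma tail_bound:
  assumes "\<forall>n\<ge>M. qq n \<le> e" "e > 0" "x \<ge> 0" "y \<ge> 0"
  shows "(\<Sum>n\<in>{M..<N}. pois x n * pois y n) \<le> e"
proof -
  have "(\<Sum>n\<in>{M..<N}. pois x n * pois y n) \<le> (\<Sum>n\<in>{M..<N}. pois x n * e)"
    using assms by (intro sum_mono mult_left_mono order.trans[OF pois_le_qq]) (auto simp: pois_nonneg)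
  also have "\<dots> = e * (\<Sum>n\<in>{M..<N}. pois x n)" by (simp add: sum_distrib_left mult.commute)
  also have "\<dots> \<le> e * (\<Sum>n<N. pois x n)"
    using assms by (intro mult_left_mono sum_mono2) (auto simp: pois_nonneg)
  also have "\<dots> \<le> e * 1" using assms by (intro mult_left_mono pois_sum_le1) auto
  finally show ?thesis by simp
qed

lemma pointwise_eq:
  "(exp (- p * r\<^sup>2) * p ^ (2 * n) / (fact n)\<^sup>2 * r ^ (2 * n)) * (f s * s ^ (2 * n + 1) * exp (- p * s\<^sup>2))
   = f s * s * (pois (p * r\<^sup>2) n * pois (p * s\<^sup>2) n)"
proof -
  have "(p * r\<^sup>2) ^ n * (p * s\<^sup>2) ^ n = p ^ (2 * n) * r ^ (2 * n) * s ^ (2 * n)"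
    by (simp add: power_mult_distrib power_mult[symmetric] mult_2 power_add)
  moreover have "s ^ (2 * n + 1) = s * s ^ (2 * n)" by simp
  ultimately show ?thesis
    by (simp add: pois_def power2_eq_square field_simps)
qed

lemma lterm_eq:
  "lterm f a n (r, p) = a * (2 * pi) *
     lebesgue_integral lborel (\<lambda>s. indicator {0..} s * (f s * s * (pois (p * r\<^sup>2) n * pois (p * s\<^sup>2) n)))"
proof -
  define K where "K = exp (- p * r\<^sup>2) * p ^ (2 * n) / (fact n)\<^sup>2 * r ^ (2 * n)"
  define I where "I = lebesgue_integral lborel (\<lambda>s. indicator {0..} s *\<^sub>R (f s * s ^ (2 * n + 1) * exp (- p * s\<^sup>2)))"
  have "lterm f a n (r, p) = a * (2 * pi) * (K * I)"
    by (simp add: lterm_def cmomp_def set_lebesgue_integral_def K_def I_def)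
  also have "K * I = lebesgue_integral lborel (\<lambda>s. K * (indicator {0..} s *\<^sub>R (f s * s ^ (2 * n + 1) * exp (- p * s\<^sup>2))))"
    unfolding I_def by (rule integral_mult_right_zero[symmetric])
  also have "(\<lambda>s. K * (indicator {0..} s *\<^sub>R (f s * s ^ (2 * n + 1) * exp (- p * s\<^sup>2))))
     = (\<lambda>s. indicator {0..} s * (f s * s * (pois (p * r\<^sup>2) n * pois (p * s\<^sup>2) n)))"
  proof
    fix s
    have "K * (indicator {0..} s *\<^sub>R (f s * s ^ (2 * n + 1) * exp (- p * s\<^sup>2)))
       = indicator {0..} s * (K * (f s * s ^ (2 * n + 1) * exp (- p * s\<^sup>2)))" by simp
    also have "K * (f s * s ^ (2 * n + 1) * exp (- p * s\<^sup>2)) = f s * s * (pois (p * r\<^sup>2) n * pois (p * s\<^sup>2) n)"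
      unfolding K_def by (rule pointwise_eq)
    finally show "K * (indicator {0..} s *\<^sub>R (f s * s ^ (2 * n + 1) * exp (- p * s\<^sup>2)))
       = indicator {0..} s * (f s * s * (pois (p * r\<^sup>2) n * pois (p * s\<^sup>2) n))" .
  qed
  finally show ?thesis .
qed

lemma pp_bounds:
  assumes "p \<ge> 0"
  shows "0 \<le> pois (p * r\<^sup>2) n * pois (p * s\<^sup>2) n" "pois (p * r\<^sup>2) n * pois (p * s\<^sup>2) n \<le> 1"
proof -
  have a: "p * r\<^sup>2 \<ge> 0" "p * s\<^sup>2 \<ge> 0" using assms by auto
  show "0 \<le> pois (p * r\<^sup>2) n * pois (p * s\<^sup>2) n" using a by (simp add: pois_nonneg)
  show "pois (p * r\<^sup>2) n * pois (p * s\<^sup>2) n \<le> 1"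
    using a by (intro mult_le_one pois_le1 pois_nonneg) auto
qed

lemma G_integrable:
  assumes "cmom_exists f 0" "p \<ge> 0"
  shows "integrable lborel (\<lambda>s. indicator {0..} s * (f s * s * (pois (p * r\<^sup>2) n * pois (p * s\<^sup>2) n)))"
proof -
  have h: "integrable lborel (\<lambda>s. indicator {0..} s *\<^sub>R (f s * s ^ (0 + 1)))"
    using assms(1) by (simp add: cmom_exists_def set_integrable_def)
  have m: "(\<lambda>s. pois (p * r\<^sup>2) n * pois (p * s\<^sup>2) n) \<in> borel_measurable lborel"
    unfolding pois_def by measurable
  have "(\<lambda>s. (indicator {0..} s *\<^sub>R (f s * s ^ (0 + 1))) * (pois (p * r\<^sup>2) n * pois (p * s\<^sup>2) n)) \<in> borel_measurable lborel"
    using borel_measurable_integrable[OF h] m by (rule borel_measurable_times)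
  hence m2: "(\<lambda>s. indicator {0..} s * (f s * s * (pois (p * r\<^sup>2) n * pois (p * s\<^sup>2) n))) \<in> borel_measurable lborel"
    by (simp add: mult.assoc)
  show ?thesis
  proof (rule Bochner_Integration.integrable_bound[OF h m2], rule AE_I2)
    fix s
    have "norm (indicator {0..} s * (f s * s * (pois (p * r\<^sup>2) n * pois (p * s\<^sup>2) n)))
       = norm (indicator {0..} s *\<^sub>R (f s * s ^ (0 + 1))) * \<bar>pois (p * r\<^sup>2) n * pois (p * s\<^sup>2) n\<bar>"
      by (simp add: abs_mult)
    also have "\<dots> \<le> norm (indicator {0..} s *\<^sub>R (f s * s ^ (0 + 1))) * 1"
      using pp_bounds[OF assms(2), of r n s] by (intro mult_left_mono) auto
    finally show "norm (indicator {0..} s * (f s * s * (pois (p * r\<^sup>2) n * pois (p * s\<^sup>2) n)))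
       \<le> norm (indicator {0..} s *\<^sub>R (f s * s ^ (0 + 1)))" by simp
  qed
qed

lemma lterm_nonneg:
  assumes "cond1 f" "a > 0" "p \<ge> 0"
  shows "lterm f a n (r, p) \<ge> 0"
proof -
  have f: "\<And>s. s \<ge> 0 \<Longrightarrow> f s \<ge> 0" using assms(1) by (auto simp: cond1_def)
  have "0 \<le> lebesgue_integral lborel (\<lambda>s. indicator {0..} s * (f s * s * (pois (p * r\<^sup>2) n * pois (p * s\<^sup>2) n)))"
    using f pp_bounds[OF assms(3)] by (intro Bochner_Integration.integral_nonneg) (auto simp: indicator_def)
  thus ?thesis using assms(2) by (simp add: lterm_eq)
qed

lemma partial_bound:
  assumes "cond1 f" "a > 0" "p \<ge> 0" "r \<ge> 0" "\<forall>n\<ge>M. qq n \<le> e" "e > 0"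
  shows "(\<Sum>n\<in>{M..<N}. lterm f a n (r, p)) \<le> e * a * cmom f 0"
proof -
  have f: "\<And>s. s \<ge> 0 \<Longrightarrow> f s \<ge> 0" using assms(1) by (auto simp: cond1_def)
  have ex: "cmom_exists f 0" using assms(1) by (simp add: cond1_def)
  have h: "integrable lborel (\<lambda>s. indicator {0..} s *\<^sub>R (f s * s ^ (0 + 1)))"
    using ex by (simp add: cmom_exists_def set_integrable_def)
  define G where "G = (\<lambda>n s. indicator {0..} s * (f s * s * (pois (p * r\<^sup>2) n * pois (p * s\<^sup>2) n)))"
  have Gi: "\<And>n. integrable lborel (G n)" unfolding G_def by (rule G_integrable[OF ex assms(3)])
  have "(\<Sum>n\<in>{M..<N}. lterm f a n (r, p)) = (\<Sum>n\<in>{M..<N}. a * (2 * pi) * lebesgue_integral lborel (G n))"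
    by (simp add: lterm_eq G_def)
  also have "\<dots> = a * (2 * pi) * (\<Sum>n\<in>{M..<N}. lebesgue_integral lborel (G n))"
    by (simp add: sum_distrib_left)
  also have "(\<Sum>n\<in>{M..<N}. lebesgue_integral lborel (G n)) = lebesgue_integral lborel (\<lambda>s. \<Sum>n\<in>{M..<N}. G n s)"
    by (rule Bochner_Integration.integral_sum[symmetric]) (rule Gi)
  also have "\<dots> \<le> lebesgue_integral lborel (\<lambda>s. e * (indicator {0..} s *\<^sub>R (f s * s ^ (0 + 1))))"
  proof (rule integral_mono)
    show "integrable lborel (\<lambda>s. \<Sum>n\<in>{M..<N}. G n s)"
      by (rule Bochner_Integration.integrable_sum) (rule Gi)
    show "integrable lborel (\<lambda>s. e * (indicator {0..} s *\<^sub>R (f s * s ^ (0 + 1))))"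
      using h by auto
    fix s
    have "(\<Sum>n\<in>{M..<N}. G n s) = indicator {0..} s * (f s * s) * (\<Sum>n\<in>{M..<N}. pois (p * r\<^sup>2) n * pois (p * s\<^sup>2) n)"
      by (simp add: G_def sum_distrib_left mult.assoc)
    also have "\<dots> \<le> indicator {0..} s * (f s * s) * e"
      using f assms by (intro mult_left_mono tail_bound) (auto simp: indicator_def)
    finally show "(\<Sum>n\<in>{M..<N}. G n s) \<le> e * (indicator {0..} s *\<^sub>R (f s * s ^ (0 + 1)))"
      by (simp add: mult.commute)
  qed
  also have "\<dots> = e * lebesgue_integral lborel (\<lambda>s. indicator {0..} s *\<^sub>R (f s * s ^ (0 + 1)))"
    by simp
  finally have "(\<Sum>n\<in>{M..<N}. lterm f a n (r, p)) \<le> a * (2 * pi) * (e * lebesgue_integral lborel (\<lambda>s. indicator {0..} s *\<^sub>R (f s * s ^ (0 + 1))))"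
    using assms(2) by (simp add: mult_left_mono)
  also have "\<dots> = e * a * cmom f 0"
    by (simp add: cmom_def set_lebesgue_integral_def)
  finally show ?thesis .
qed

theorem lemma6:
  fixes f :: "real \<Rightarrow> real" and a :: real
  assumes "cond1 f" and "cond2a f" and "a > 0"
  shows "(\<forall>x\<in>{0..} \<times> {0..}. summable (\<lambda>n. \<bar>lterm f a n x\<bar>))
       \<and> uniformly_convergent_on ({0..} \<times> {0..}) (\<lambda>N x. \<Sum>n<N. lterm f a n x)"
proof -
  define X :: "(real \<times> real) set" where "X = {0..} \<times> {0..}"
  define T where "T = (\<lambda>N x. \<Sum>n<N. lterm f a n x)"
  define C where "C = a * cmom f 0"
  have C: "C > 0" using assms(1,3) by (simp add: C_def cond1_def)
  have nn: "\<And>n x. x \<in> X \<Longrightarrow> lterm f a n x \<ge> 0"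
    using lterm_nonneg[OF assms(1,3)] by (auto simp: X_def)
  have UC: "uniformly_Cauchy_on X T"
  proof (rule uniformly_Cauchy_onI')
    fix e :: real assume e: "e > 0"
    hence e': "e / (2 * C) > 0" using C by simp
    obtain M where M: "\<forall>n\<ge>M. qq n \<le> e / (2 * C)" using qq_small[OF e'] by blast
    show "\<exists>M. \<forall>x\<in>X. \<forall>m\<ge>M. \<forall>n>m. dist (T m x) (T n x) < e"
    proof (intro exI ballI allI impI)
      fix x m n assume x: "x \<in> X" and m: "m \<ge> M" and mn: "n > m"
      obtain r p where rp: "x = (r, p)" "r \<ge> 0" "p \<ge> 0" using x by (auto simp: X_def)
      have Mm: "\<forall>k\<ge>m. qq k \<le> e / (2 * C)" using M m by auto
      have D: "T n x - T m x = (\<Sum>k\<in>{m..<n}. lterm f a k x)"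
        unfolding T_def lessThan_atLeast0 using mn by (intro sum_diff_nat_ivl) auto
      have "(\<Sum>k\<in>{m..<n}. lterm f a k x) \<le> e / (2 * C) * a * cmom f 0"
        unfolding rp(1) by (rule partial_bound[OF assms(1,3) rp(3,2) Mm e'])
      also have "\<dots> = e / 2" using assms(1,3) unfolding C_def by (simp add: field_simps cond1_def)
      finally have up: "(\<Sum>k\<in>{m..<n}. lterm f a k x) \<le> e / 2" .
      have lo: "(\<Sum>k\<in>{m..<n}. lterm f a k x) \<ge> 0" using nn x by (intro sum_nonneg) auto
      have "dist (T m x) (T n x) = \<bar>T n x - T m x\<bar>" by (simp add: dist_real_def abs_minus_commute)
      also have "\<dots> \<le> e / 2" using D up lo by simp
      finally show "dist (T m x) (T n x) < e" using e by simp
    qed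
  qed
  have "\<forall>x\<in>X. summable (\<lambda>n. \<bar>lterm f a n x\<bar>)"
  proof
    fix x assume x: "x \<in> X"
    have "Cauchy (\<lambda>N. T N x)" using UC x by (rule uniformly_Cauchy_imp_Cauchy)
    hence "convergent (\<lambda>N. \<Sum>n<N. lterm f a n x)" unfolding T_def by (simp add: Cauchy_convergent_iff)
    hence "summable (\<lambda>n. lterm f a n x)" by (simp add: summable_iff_convergent)
    moreover have "(\<lambda>n. \<bar>lterm f a n x\<bar>) = (\<lambda>n. lterm f a n x)" using nn x by auto
    ultimately show "summable (\<lambda>n. \<bar>lterm f a n x\<bar>)" by simp
  qed
  moreover have "uniformly_convergent_on X T" using UC by (rule Cauchy_uniformly_convergent)
  ultimately show ?thesis unfolding X_def T_def by simp
qed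

end
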